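(* Let $m,n,k$ be positive integers with $(m,k-1)=1$ and $n=\mathrm{ind}_m(k)$, let $G=G(m,n,k)=\langle a,b;\ a^m=1,\ b^n=1,\ b^{-1}ab=a^k\rangle$, $R=\{k_j:j\in\mathbb{Z}_n\}$ and $L=\{-k_j:j\in\mathbb{Z}_n\}$. (i) If $\mathrm{orb}(x,R^* )$ is basic for every $x\in R^*$, then $\mathrm{P}(G)=\dot{\bigcup}_{x\in R^*}C(x,1)$ and $|\mathrm{P}(G)|=|R^*|\,m$. (ii) If $\mathrm{orb}(x,L^* )$ is basic for every $x\in L^*$, then $\Lambda(G)=\dot{\bigcup}_{x\in L^*}C(x,1)$ and $|\Lambda(G)|=|L^*|\,m$.
   Context: $\mathrm{ind}_m(k)$ is the least positive integer $d$ with $k^d\equiv1\pmod m$; $k_t=k^t-1\pmod m$. Elements of $G$ are written uniquely as $a^ib^j$, $i\in\mathbb{Z}_m$, $j\in\mathbb{Z}_n$. Commutators are $[x,y]=x^{-1}y^{-1}xy$; $(x)\rho(g)=[x,g]$, $(x)\lambda(g)=[g,x]$; maps are written on the right and composed left to right; $\mathrm{P}(G)$ and $\Lambda(G)$ are the semigroups generated by all $\rho(g)$, resp. all $\lambda(g)$. For $x,y\in\mathbb{Z}_m$, the map $\mu(x,y):G\to G$ is $(a^ib^j)\mu(x,y)=a^{xik^j-yk_j}$, and $C(x,y)=\{\mu(x,yz):z\in\mathbb{Z}_m\}$. For $S\subseteq\mathbb{Z}_m$, $S^*$ is the multiplicative subsemigroup of $\mathbb{Z}_m$ generated by $S$ and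 $I(S^* )$ is its set of elements invertible in $\mathbb{Z}_m$; $\mathrm{orb}(x,S^* )=\{xy:y\in I(S^* )\}$, and it is basic if it meets $S$. *)

theory Defs
  imports "HOL-Algebra.Group" "HOL-Library.FuncSet" "HOL-Number_Theory.Cong"
begin

definition is_ind :: "nat \<Rightarrow> nat \<Rightarrow> nat \<Rightarrow> bool" where
  "is_ind m k n \<longleftrightarrow> n > 0 \<and> [k ^ n = 1] (mod m) \<and> (\<forall>d. 0 < d \<and> d < n \<longrightarrow> \<not> [k ^ d = 1] (mod m))"

definition kk :: "nat \<Rightarrow> nat \<Rightarrow> nat \<Rightarrow> int" where
  "kk m k t = (int k ^ t - 1) mod int m"

text \<open>The group G(m,n,k): the pair (i,j) stands for a^i b^j, with i in Z_m, j in Z_n.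
  Since b^{-1} a b = a^k and k^n = 1 (mod m), we have b^j a^i' = a^(i' k^(n-j)) b^j.\<close>
definition Gmul :: "nat \<Rightarrow> nat \<Rightarrow> nat \<Rightarrow> int \<times> int \<Rightarrow> int \<times> int \<Rightarrow> int \<times> int" where
  "Gmul m n k p q =
     ((fst p + fst q * int k ^ nat ((int n - snd p) mod int n)) mod int m,
      (snd p + snd q) mod int n)"

definition Gmnk :: "nat \<Rightarrow> nat \<Rightarrow> nat \<Rightarrow> (int \<times> int) monoid" where
  "Gmnk m n k = \<lparr>carrier = {0..<int m} \<times> {0..<int n}, monoid.mult = Gmul m n k, one = (0, 0)\<rparr>"

definition commu :: "('a, 'b) monoid_scheme \<Rightarrow> 'a \<Rightarrow> 'a \<Rightarrow> 'a" where
  "commu G x y = inv\<^bsub>G\<^esub> x \<otimes>\<^bsub>G\<^esub> inv\<^bsub>G\<^esub> y \<otimes>\<^bsub>G\<^esub> x \<otimes>\<^bsub>G\<^esub> y"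

definition rho :: "('a, 'b) monoid_scheme \<Rightarrow> 'a \<Rightarrow> ('a \<Rightarrow> 'a)" where
  "rho G g = (\<lambda>x\<in>carrier G. commu G x g)"

definition lam :: "('a, 'b) monoid_scheme \<Rightarrow> 'a \<Rightarrow> ('a \<Rightarrow> 'a)" where
  "lam G g = (\<lambda>x\<in>carrier G. commu G g x)"

text \<open>Semigroup (under composition of maps A -> A, written on the right, i.e. first f then g)
  generated by a set S of maps.\<close>
inductive_set map_sgrp :: "'a set \<Rightarrow> ('a \<Rightarrow> 'a) set \<Rightarrow> ('a \<Rightarrow> 'a) set"
  for A :: "'a set" and S :: "('a \<Rightarrow> 'a) set" where
  gen: "f \<in> S \<Longrightarrow> f \<in> map_sgrp A S"
| comp: "f \<in> map_sgrp A S \<Longrightarrow> g \<in> map_sgrp A S \<Longrightarrow> compose A g f \<in> map_sgrp A S"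

definition PG :: "('a, 'b) monoid_scheme \<Rightarrow> ('a \<Rightarrow> 'a) set" where
  "PG G = map_sgrp (carrier G) (rho G ` carrier G)"

definition LG :: "('a, 'b) monoid_scheme \<Rightarrow> ('a \<Rightarrow> 'a) set" where
  "LG G = map_sgrp (carrier G) (lam G ` carrier G)"

definition mu :: "nat \<Rightarrow> nat \<Rightarrow> nat \<Rightarrow> int \<Rightarrow> int \<Rightarrow> (int \<times> int \<Rightarrow> int \<times> int)" where
  "mu m n k x y = (\<lambda>p\<in>carrier (Gmnk m n k).
      ((x * fst p * int k ^ nat (snd p) - y * kk m k (nat (snd p))) mod int m, 0))"

definition Cset :: "nat \<Rightarrow> nat \<Rightarrow> nat \<Rightarrow> int \<Rightarrow> int \<Rightarrow> (int \<times> int \<Rightarrow> int \<times> int) set" where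
  "Cset m n k x y = {mu m n k x ((y * z) mod int m) | z. z \<in> {0..<int m}}"

inductive_set mult_sgrp :: "nat \<Rightarrow> int set \<Rightarrow> int set" for m :: nat and S :: "int set" where
  gen: "s \<in> S \<Longrightarrow> s mod int m \<in> mult_sgrp m S"
| mul: "a \<in> mult_sgrp m S \<Longrightarrow> b \<in> mult_sgrp m S \<Longrightarrow> (a * b) mod int m \<in> mult_sgrp m S"

definition units_in :: "nat \<Rightarrow> int set \<Rightarrow> int set" where
  "units_in m T = {x \<in> T. coprime x (int m)}"

definition orb :: "nat \<Rightarrow> int \<Rightarrow> int set \<Rightarrow> int set" where
  "orb m x T = {(x * y) mod int m | y. y \<in> units_in m T}"

definition basic :: "nat \<Rightarrow> int set \<Rightarrow> int \<Rightarrow> bool" where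
  "basic m S x \<longleftrightarrow> orb m x (mult_sgrp m S) \<inter> S \<noteq> {}"

definition Rset :: "nat \<Rightarrow> nat \<Rightarrow> nat \<Rightarrow> int set" where
  "Rset m n k = kk m k ` {0..<n}"

definition Lset :: "nat \<Rightarrow> nat \<Rightarrow> nat \<Rightarrow> int set" where
  "Lset m n k = (\<lambda>t. (- kk m k t) mod int m) ` {0..<n}"

end

theory Submission imports Defs "HOL-Number_Theory.Residues"
begin

context
  fixes m n k :: nat
  assumes m0: "m > 0" and k0: "k > 0" and cop: "coprime m (k - 1)" and ind: "is_ind m k n"
begin

lemma n0: "n > 0" using ind by (simp add: is_ind_def)

lemma kn1: "[int k ^ n = 1] (mod int m)"
proof -
  have "[k ^ n = 1] (mod m)" using ind by (simp add: is_ind_def)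
  then show ?thesis by (metis cong_int_iff of_nat_1 of_nat_power)
qed

lemma powmod: "a mod n = b mod n \<Longrightarrow> [int k ^ a = int k ^ b] (mod int m)"
proof -
  have r: "[int k ^ c = int k ^ (c mod n)] (mod int m)" for c
  proof -
    have "int k ^ c = int k ^ (n * (c div n) + c mod n)" by simp
    also have "... = (int k ^ n) ^ (c div n) * int k ^ (c mod n)" by (simp only: power_add power_mult)
    finally have "int k ^ c = (int k ^ n) ^ (c div n) * int k ^ (c mod n)" .
    moreover have "[(int k ^ n) ^ (c div n) * int k ^ (c mod n) = 1 ^ (c div n) * int k ^ (c mod n)] (mod int m)"
      by (intro cong_mult cong_pow kn1 cong_refl)
    ultimately show ?thesis by simp
  qed
  assume "a mod n = b mod n"
  then show ?thesis using r[of a] r[of b] by (metis cong_sym cong_trans)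
qed

lemma powE: "[int a = z] (mod int n) \<Longrightarrow> [int k ^ nat (z mod int n) = int k ^ a] (mod int m)"
proof -
  assume h: "[int a = z] (mod int n)"
  have "int (nat (z mod int n)) = z mod int n" using n0 by simp
  also have "... = int a mod int n" using h by (simp add: cong_def)
  also have "... = int (a mod n)" by (simp add: of_nat_mod)
  finally have "nat (z mod int n) = a mod n" by linarith
  then have "nat (z mod int n) mod n = a mod n" by simp
  then show ?thesis by (rule powmod)
qed

lemma kinv: "[int k ^ nat ((int n - int j) mod int n) * int k ^ j = 1] (mod int m)"
proof -
  have "int (nat ((int n - int j) mod int n) + j) mod int n = ((int n - int j) mod int n + int j) mod int n"
    using n0 by simp
  also have "... = 0" by (simp add: mod_add_left_eq)
  finally have "(nat ((int n - int j) mod int n) + j) mod n = n mod n"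
    by (metis mod_self of_nat_0 of_nat_eq_iff of_nat_mod)
  then have "[int k ^ (nat ((int n - int j) mod int n) + j) = int k ^ n] (mod int m)" by (rule powmod)
  then show ?thesis using kn1 by (metis cong_trans power_add)
qed


abbreviation "G \<equiv> Gmnk m n k"

lemma carrierG: "carrier G = {0..<int m} \<times> {0..<int n}" by (simp add: Gmnk_def)

lemma mulG: "(a, b) \<otimes>\<^bsub>G\<^esub> (c, d) = ((a + c * int k ^ nat ((int n - b) mod int n)) mod int m, (b + d) mod int n)"
  by (simp add: Gmnk_def Gmul_def)

lemma oneG: "\<one>\<^bsub>G\<^esub> = (0, 0)" by (simp add: Gmnk_def)

lemma step_cong: "[a = a'] (mod M) \<Longrightarrow> [b = b'] (mod M) \<Longrightarrow> [c = c'] (mod M) \<Longrightarrow>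
   [(a + b * c) mod M = a' + b' * c'] (mod M)" for a b c a' b' c' M :: int
  by (simp add: cong_add cong_mult)

lemma kinv': "0 \<le> j \<Longrightarrow> [int k ^ nat ((int n - j) mod int n) * int k ^ nat j = 1] (mod int m)"
  using kinv[of "nat j"] by simp

lemma invG:
  assumes "(i, j) \<in> carrier G"
  shows "inv\<^bsub>G\<^esub> (i, j) = ((- i * int k ^ nat j) mod int m, (- j) mod int n)"
proof -
  let ?E = "int k ^ nat ((int n - j) mod int n)"
  have ij: "0 \<le> i" "i < int m" "0 \<le> j" "j < int n" using assms by (auto simp: carrierG)
  let ?y = "((- i * int k ^ nat j) mod int m, (- j) mod int n)"
  have yc: "?y \<in> carrier G" using m0 n0 by (simp add: carrierG)
  have E1: "[?E * int k ^ nat j = 1] (mod int m)" using kinv' ij by simp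
  have m1: "(i, j) \<otimes>\<^bsub>G\<^esub> ?y = \<one>\<^bsub>G\<^esub>"
  proof -
    have "[(i + ((- i * int k ^ nat j) mod int m) * ?E) mod int m = i + (- i) * (?E * int k ^ nat j)] (mod int m)"
      by (rule cong_trans[OF step_cong[OF cong_refl cong_mod_left[THEN iffD2, OF cong_refl] cong_refl]]) (simp add: algebra_simps)
    also have "[i + (- i) * (?E * int k ^ nat j) = i + (-i) * 1] (mod int m)"
      by (intro cong_add cong_mult cong_refl E1)
    finally have "(i + ((- i * int k ^ nat j) mod int m) * ?E) mod int m = 0"
      by (simp add: cong_def)
    moreover have "(j + (- j) mod int n) mod int n = 0" by (simp add: mod_add_right_eq)
    ultimately show ?thesis by (simp add: mulG oneG)
  qed
  have m2: "?y \<otimes>\<^bsub>G\<^esub> (i, j) = \<one>\<^bsub>G\<^esub>"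
  proof -
    have P: "[int k ^ nat ((int n - (- j) mod int n) mod int n) = int k ^ nat j] (mod int m)"
    proof (rule powE)
      have "(int n - (- j) mod int n) mod int n = (int n - (- j)) mod int n" by (rule mod_diff_right_eq)
      also have "... = j mod int n" by simp
      finally show "[int (nat j) = int n - (- j) mod int n] (mod int n)" using ij by (simp add: cong_def)
    qed
    have "[((- i * int k ^ nat j) mod int m + i * int k ^ nat ((int n - (- j) mod int n) mod int n)) mod int m
           = (- i * int k ^ nat j) + i * int k ^ nat j] (mod int m)"
      by (rule step_cong[OF _ _ P]) simp_all
    then have "((- i * int k ^ nat j) mod int m + i * int k ^ nat ((int n - (- j) mod int n) mod int n)) mod int m = 0"
      by (simp add: cong_def)
    moreover have "((- j) mod int n + j) mod int n = 0" by (simp add: mod_add_left_eq)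
    ultimately show ?thesis by (simp add: mulG oneG)
  qed
  have uniq: "y = ?y" if "y \<in> carrier G" "(i, j) \<otimes>\<^bsub>G\<^esub> y = \<one>\<^bsub>G\<^esub>" for y
  proof -
    obtain y1 y2 where y: "y = (y1, y2)" by (cases y)
    have yr: "0 \<le> y1" "y1 < int m" "0 \<le> y2" "y2 < int n" using that(1) y by (auto simp: carrierG)
    have e1: "(i + y1 * ?E) mod int m = 0" and e2: "(j + y2) mod int n = 0"
      using that(2) y by (simp_all add: mulG oneG)
    have "[j + y2 = 0] (mod int n)" using e2 by (simp add: cong_def)
    then have "[(j + y2) - j = 0 - j] (mod int n)" by (intro cong_diff cong_refl)
    then have "[y2 = - j] (mod int n)" by simp
    then have y2: "y2 = (- j) mod int n" using yr by (simp add: cong_def)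
    have "[i + y1 * ?E = 0] (mod int m)" using e1 by (simp add: cong_def)
    then have "[(i + y1 * ?E) * int k ^ nat j = 0 * int k ^ nat j] (mod int m)" by (intro cong_mult cong_refl)
    then have "[i * int k ^ nat j + y1 * (?E * int k ^ nat j) = 0] (mod int m)" by (simp add: algebra_simps)
    moreover have "[i * int k ^ nat j + y1 * (?E * int k ^ nat j) = i * int k ^ nat j + y1 * 1] (mod int m)"
      by (intro cong_add cong_mult cong_refl E1)
    ultimately have "[i * int k ^ nat j + y1 * 1 = 0] (mod int m)" using cong_sym cong_trans by blast
    then have "[i * int k ^ nat j + y1 = 0] (mod int m)" by simp
    then have "[(i * int k ^ nat j + y1) - i * int k ^ nat j = 0 - i * int k ^ nat j] (mod int m)" by (intro cong_diff cong_refl)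
    then have "[y1 = - i * int k ^ nat j] (mod int m)" by simp
    then have y1: "y1 = (- i * int k ^ nat j) mod int m" using yr by (simp add: cong_def)
    show ?thesis using y y1 y2 by simp
  qed
  show ?thesis unfolding m_inv_def
  proof (rule the_equality)
    show "?y \<in> carrier G \<and> (i, j) \<otimes>\<^bsub>G\<^esub> ?y = \<one>\<^bsub>G\<^esub> \<and> ?y \<otimes>\<^bsub>G\<^esub> (i, j) = \<one>\<^bsub>G\<^esub>"
      using yc m1 m2 by blast
  next
    fix y assume "y \<in> carrier G \<and> (i, j) \<otimes>\<^bsub>G\<^esub> y = \<one>\<^bsub>G\<^esub> \<and> y \<otimes>\<^bsub>G\<^esub> (i, j) = \<one>\<^bsub>G\<^esub>"
    then show "y = ?y" using uniq by blast
  qed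
qed


lemma modc: "[x mod M = x] (mod M)" for x M :: int by (simp add: cong_def)

lemma hm: "[int n - x mod int n = - x] (mod int n)"
proof -
  have "(int n - x mod int n) mod int n = (int n - x) mod int n" by (rule mod_diff_right_eq)
  also have "... = (- x) mod int n" by (simp only: diff_conv_add_uminus mod_add_self1)
  finally show ?thesis by (simp add: cong_def)
qed

lemma commuG:
  assumes "(i, j) \<in> carrier G" "(s, t) \<in> carrier G"
  shows "commu G (i, j) (s, t) = ((i * int k ^ nat j * (int k ^ nat t - 1) - s * int k ^ nat t * (int k ^ nat j - 1)) mod int m, 0)"
proof -
  have r: "0 \<le> i" "i < int m" "0 \<le> j" "j < int n" "0 \<le> s" "s < int m" "0 \<le> t" "t < int n"
    using assms by (auto simp: carrierG)
  define K where "K = int k"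
  define A1 where "A1 = (- i * K ^ nat j) mod int m"
  define B1 where "B1 = (- j) mod int n"
  define A2 where "A2 = (- s * K ^ nat t) mod int m"
  define B2 where "B2 = (- t) mod int n"
  define u1 where "u1 = (A1 + A2 * K ^ nat ((int n - B1) mod int n)) mod int m"
  define u2 where "u2 = (B1 + B2) mod int n"
  define v1 where "v1 = (u1 + i * K ^ nat ((int n - u2) mod int n)) mod int m"
  define v2 where "v2 = (u2 + j) mod int n"
  define w1 where "w1 = (v1 + s * K ^ nat ((int n - v2) mod int n)) mod int m"
  define w2 where "w2 = (v2 + t) mod int n"
  have i1: "inv\<^bsub>G\<^esub> (i, j) = (A1, B1)" unfolding invG[OF assms(1)] A1_def B1_def K_def ..
  have i2: "inv\<^bsub>G\<^esub> (s, t) = (A2, B2)" unfolding invG[OF assms(2)] A2_def B2_def K_def ..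
  have m1: "(A1, B1) \<otimes>\<^bsub>G\<^esub> (A2, B2) = (u1, u2)" unfolding mulG u1_def u2_def K_def ..
  have m2: "(u1, u2) \<otimes>\<^bsub>G\<^esub> (i, j) = (v1, v2)" unfolding mulG v1_def v2_def K_def ..
  have m3: "(v1, v2) \<otimes>\<^bsub>G\<^esub> (s, t) = (w1, w2)" unfolding mulG w1_def w2_def K_def ..
  have c: "commu G (i, j) (s, t) = (w1, w2)"
    unfolding commu_def i1 i2 m1 m2 m3 ..
  have P1: "[K ^ nat ((int n - B1) mod int n) = K ^ nat j] (mod int m)"
    unfolding K_def
  proof (rule powE)
    show "[int (nat j) = int n - B1] (mod int n)" unfolding B1_def using hm[of "- j"] r by (simp add: cong_sym)
  qed
  have P2: "[K ^ nat ((int n - u2) mod int n) = K ^ nat j * K ^ nat t] (mod int m)"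
    unfolding K_def power_add[symmetric]
  proof (rule powE)
    have "[- (B1 + B2) = - ((- j) + (- t))] (mod int n)"
      unfolding B1_def B2_def by (intro cong_minus_minus_iff[THEN iffD2] cong_add modc)
    then have "[int n - u2 = - ((- j) + (- t))] (mod int n)" unfolding u2_def by (rule cong_trans[OF hm])
    then have "[int n - u2 = j + t] (mod int n)" by (simp add: add.commute)
    then show "[int (nat j + nat t) = int n - u2] (mod int n)" using r by (simp add: cong_sym)
  qed
  have P3: "[K ^ nat ((int n - v2) mod int n) = K ^ nat t] (mod int m)"
    unfolding K_def
  proof (rule powE)
    have u2c: "[u2 = (- j) + (- t)] (mod int n)"
      unfolding u2_def B1_def B2_def by (rule cong_trans[OF modc cong_add[OF modc modc]])
    have "[- (u2 + j) = - (((- j) + (- t)) + j)] (mod int n)"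
      by (intro cong_minus_minus_iff[THEN iffD2] cong_add u2c cong_refl)
    then have "[int n - v2 = - (((- j) + (- t)) + j)] (mod int n)" unfolding v2_def by (rule cong_trans[OF hm])
    then have "[int n - v2 = t] (mod int n)" by simp
    then show "[int (nat t) = int n - v2] (mod int n)" using r by (simp add: cong_sym)
  qed
  have U: "[u1 = (- i * K ^ nat j) + (- s * K ^ nat t) * K ^ nat j] (mod int m)"
    unfolding u1_def A1_def A2_def by (rule step_cong[OF modc modc P1])
  have V: "[v1 = ((- i * K ^ nat j) + (- s * K ^ nat t) * K ^ nat j) + i * (K ^ nat j * K ^ nat t)] (mod int m)"
    unfolding v1_def by (rule step_cong[OF U cong_refl P2])
  have W: "[w1 = (((- i * K ^ nat j) + (- s * K ^ nat t) * K ^ nat j) + i * (K ^ nat j * K ^ nat t)) + s * K ^ nat t] (mod int m)"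
    unfolding w1_def by (rule step_cong[OF V cong_refl P3])
  have "(((- i * K ^ nat j) + (- s * K ^ nat t) * K ^ nat j) + i * (K ^ nat j * K ^ nat t)) + s * K ^ nat t
     = i * K ^ nat j * (K ^ nat t - 1) - s * K ^ nat t * (K ^ nat j - 1)"
    by (simp add: algebra_simps)
  with W have "[w1 = i * K ^ nat j * (K ^ nat t - 1) - s * K ^ nat t * (K ^ nat j - 1)] (mod int m)" by simp
  moreover have "w1 mod int m = w1" unfolding w1_def by simp
  ultimately have w1: "w1 = (i * K ^ nat j * (K ^ nat t - 1) - s * K ^ nat t * (K ^ nat j - 1)) mod int m"
    by (simp add: cong_def)
  have "[w2 = ((- j) + (- t) + j) + t] (mod int n)"
    unfolding w2_def v2_def u2_def B1_def B2_def
    by (rule cong_trans[OF modc cong_add[OF cong_trans[OF modc cong_add[OF cong_trans[OF modc cong_add[OF modc modc]] cong_refl]] cong_refl]])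
  then have "w2 = 0" unfolding w2_def by (simp add: cong_def)
  then show ?thesis using c w1 K_def by simp
qed


abbreviation "MU \<equiv> mu m n k"

lemma mu_app: "p \<in> carrier G \<Longrightarrow> MU x y p = ((x * fst p * int k ^ nat (snd p) - y * kk m k (nat (snd p))) mod int m, 0)"
  by (simp add: mu_def)

lemma mu_in: "p \<in> carrier G \<Longrightarrow> MU x y p \<in> carrier G"
  using m0 n0 by (simp add: mu_app carrierG)

lemma mu_eqI:
  assumes "\<And>i j. (i, j) \<in> carrier G \<Longrightarrow>
     [x * i * int k ^ nat j - y * kk m k (nat j) = x' * i * int k ^ nat j - y' * kk m k (nat j)] (mod int m)"
  shows "MU x y = MU x' y'"
  unfolding mu_def
proof (rule restrict_ext)
  fix p assume p: "p \<in> carrier G"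
  obtain i j where pe: "p = (i, j)" by (cases p)
  show "((x * fst p * int k ^ nat (snd p) - y * kk m k (nat (snd p))) mod int m, 0) =
        ((x' * fst p * int k ^ nat (snd p) - y' * kk m k (nat (snd p))) mod int m, 0)"
    using assms[of i j] p pe by (simp add: cong_def)
qed

lemma kk_cong: "[kk m k t = int k ^ t - 1] (mod int m)"
  unfolding kk_def by (rule modc)

lemma kk0: "kk m k 0 = 0" by (simp add: kk_def)

lemma mu_mod: "MU x y = MU (x mod int m) (y mod int m)"
  by (rule mu_eqI) (intro cong_diff cong_mult cong_refl cong_sym[OF modc])

lemma mu_comp: "compose (carrier G) (MU x' y') (MU x y) = MU (x * x') (x' * y)"
proof -
  have "compose (carrier G) (MU x' y') (MU x y) = (\<lambda>p\<in>carrier G. ((x * x' * fst p * int k ^ nat (snd p) - x' * y * kk m k (nat (snd p))) mod int m, 0))"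
    unfolding compose_def
  proof (rule restrict_ext)
    fix p assume p: "p \<in> carrier G"
    let ?c = "(x * fst p * int k ^ nat (snd p) - y * kk m k (nat (snd p))) mod int m"
    have "MU x' y' (MU x y p) = ((x' * ?c) mod int m, 0)"
      using mu_in[OF p] by (simp add: mu_app[OF p] mu_app kk0)
    also have "(x' * ?c) mod int m = (x * x' * fst p * int k ^ nat (snd p) - x' * y * kk m k (nat (snd p))) mod int m"
    proof -
      have "[x' * ?c = x' * (x * fst p * int k ^ nat (snd p) - y * kk m k (nat (snd p)))] (mod int m)"
        by (intro cong_mult cong_refl modc)
      then show ?thesis by (simp add: cong_def algebra_simps)
    qed
    finally show "MU x' y' (MU x y p) = ((x * x' * fst p * int k ^ nat (snd p) - x' * y * kk m k (nat (snd p))) mod int m, 0)" .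
  qed
  also have "... = MU (x * x') (x' * y)" by (simp add: mu_def)
  finally show ?thesis .
qed

lemma rhoG:
  assumes "(s, t) \<in> carrier G"
  shows "rho G (s, t) = MU (kk m k (nat t)) ((s * int k ^ nat t) mod int m)"
  unfolding rho_def mu_def
proof (rule restrict_ext)
  fix p assume p: "p \<in> carrier G"
  obtain i j where pe: "p = (i, j)" by (cases p)
  let ?K = "int k"
  have "[kk m k (nat t) * i * ?K ^ nat j - ((s * ?K ^ nat t) mod int m) * kk m k (nat j)
      = (?K ^ nat t - 1) * i * ?K ^ nat j - (s * ?K ^ nat t) * (?K ^ nat j - 1)] (mod int m)"
    by (intro cong_diff cong_mult cong_refl modc kk_cong)
  then have "(i * ?K ^ nat j * (?K ^ nat t - 1) - s * ?K ^ nat t * (?K ^ nat j - 1)) mod int m =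
     (kk m k (nat t) * i * ?K ^ nat j - ((s * ?K ^ nat t) mod int m) * kk m k (nat j)) mod int m"
    by (simp add: cong_def algebra_simps)
  then show "commu G p (s, t) = ((kk m k (nat t) * fst p * ?K ^ nat (snd p) - (s * ?K ^ nat t) mod int m * kk m k (nat (snd p))) mod int m, 0)"
    using commuG[OF p[unfolded pe] assms] pe by simp
qed

lemma lamG:
  assumes "(s, t) \<in> carrier G"
  shows "lam G (s, t) = MU ((- kk m k (nat t)) mod int m) ((- s * int k ^ nat t) mod int m)"
  unfolding lam_def mu_def
proof (rule restrict_ext)
  fix p assume p: "p \<in> carrier G"
  obtain i j where pe: "p = (i, j)" by (cases p)
  let ?K = "int k"
  have "[((- kk m k (nat t)) mod int m) * i * ?K ^ nat j - ((- s * ?K ^ nat t) mod int m) * kk m k (nat j)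
      = (- (?K ^ nat t - 1)) * i * ?K ^ nat j - (- s * ?K ^ nat t) * (?K ^ nat j - 1)] (mod int m)"
    by (intro cong_diff cong_mult cong_refl cong_trans[OF modc] kk_cong cong_minus_minus_iff[THEN iffD2] modc)
  then have "(s * ?K ^ nat t * (?K ^ nat j - 1) - i * ?K ^ nat j * (?K ^ nat t - 1)) mod int m =
     (((- kk m k (nat t)) mod int m) * i * ?K ^ nat j - ((- s * ?K ^ nat t) mod int m) * kk m k (nat j)) mod int m"
    by (simp add: cong_def algebra_simps)
  then show "commu G (s, t) p = ((((- kk m k (nat t)) mod int m) * fst p * ?K ^ nat (snd p) - ((- s * ?K ^ nat t) mod int m) * kk m k (nat (snd p))) mod int m, 0)"
    using commuG[OF assms p[unfolded pe]] pe by simp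
qed


lemma n1: "m > 1 \<Longrightarrow> n > 1"
proof (rule ccontr)
  assume m1: "m > 1" and "\<not> n > 1"
  then have "n = 1" using n0 by simp
  then have "[k = 1] (mod m)" using ind by (simp add: is_ind_def)
  then have "m dvd k - 1" by (rule cong_to_1_nat)
  then have "m = 1" using cop coprime_common_divisor_nat dvd_refl by blast
  then show False using m1 by simp
qed

lemma mu_inj:
  assumes "x \<in> {0..<int m}" "y \<in> {0..<int m}" "x' \<in> {0..<int m}" "y' \<in> {0..<int m}"
    and e: "MU x y = MU x' y'"
  shows "x = x' \<and> y = y'"
proof (cases "m = 1")
  case True then show ?thesis using assms by auto
next
  case False
  then have m1: "m > 1" using m0 by simp
  then have "n > 1" by (rule n1)
  have c1: "(1, 0) \<in> carrier G" and c2: "(0, 1) \<in> carrier G" using m1 \<open>n > 1\<close> n0 by (auto simp: carrierG)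
  have "MU x y (1, 0) = MU x' y' (1, 0)" using e by simp
  then have "x mod int m = x' mod int m" by (simp add: mu_app[OF c1] kk0)
  then have xx: "x = x'" using assms by simp
  have "MU x y (0, 1) = MU x' y' (0, 1)" using e by simp
  then have "(- (y * kk m k 1)) mod int m = (- (y' * kk m k 1)) mod int m" by (simp add: mu_app[OF c2])
  then have "[- (y * kk m k 1) = - (y' * kk m k 1)] (mod int m)" by (simp add: cong_def)
  then have "[y * kk m k 1 = y' * kk m k 1] (mod int m)" by (simp add: cong_minus_minus_iff)
  moreover have "[y * kk m k 1 = y * (int k - 1)] (mod int m)" "[y' * kk m k 1 = y' * (int k - 1)] (mod int m)"
    using kk_cong[of 1] by (auto intro: cong_mult cong_refl)
  ultimately have "[y * (int k - 1) = y' * (int k - 1)] (mod int m)" by (meson cong_sym cong_trans)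
  moreover have "coprime (int k - 1) (int m)"
  proof -
    have "coprime (int (k - 1)) (int m)" using cop by (simp add: coprime_commute)
    then show ?thesis using k0 by (simp add: of_nat_diff)
  qed
  ultimately have "[y = y'] (mod int m)" by (simp add: cong_mult_rcancel)
  then have "y = y'" using assms by (simp add: cong_def)
  with xx show ?thesis by simp
qed

lemma gens_rho: "rho G ` carrier G = {MU r y | r y. r \<in> Rset m n k \<and> y \<in> {0..<int m}}"
proof (intro equalityI subsetI)
  fix f assume "f \<in> rho G ` carrier G"
  then obtain s t where st: "(s, t) \<in> carrier G" "f = rho G (s, t)" by auto
  then have "f = MU (kk m k (nat t)) ((s * int k ^ nat t) mod int m)" using rhoG by simp
  moreover have "kk m k (nat t) \<in> Rset m n k" using st(1) by (auto simp: carrierG Rset_def)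
  moreover have "(s * int k ^ nat t) mod int m \<in> {0..<int m}" using m0 by simp
  ultimately show "f \<in> {MU r y | r y. r \<in> Rset m n k \<and> y \<in> {0..<int m}}" by blast
next
  fix f assume "f \<in> {MU r y | r y. r \<in> Rset m n k \<and> y \<in> {0..<int m}}"
  then obtain t0 y where f: "f = MU (kk m k t0) y" "t0 < n" "y \<in> {0..<int m}" by (auto simp: Rset_def)
  define s where "s = (y * int k ^ nat ((int n - int t0) mod int n)) mod int m"
  have sc: "(s, int t0) \<in> carrier G" using m0 f by (simp add: carrierG s_def)
  have "[s * int k ^ t0 = y * (int k ^ nat ((int n - int t0) mod int n) * int k ^ t0)] (mod int m)"
    unfolding s_def by (rule cong_trans[OF cong_mult[OF modc cong_refl]]) (simp add: algebra_simps)
  also have "[y * (int k ^ nat ((int n - int t0) mod int n) * int k ^ t0) = y * 1] (mod int m)"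
    by (intro cong_mult cong_refl kinv)
  finally have "(s * int k ^ t0) mod int m = y" using f(3) by (simp add: cong_def)
  then have "rho G (s, int t0) = f" using rhoG[OF sc] f by simp
  then show "f \<in> rho G ` carrier G" using sc by blast
qed

lemma gens_lam: "lam G ` carrier G = {MU r y | r y. r \<in> Lset m n k \<and> y \<in> {0..<int m}}"
proof (intro equalityI subsetI)
  fix f assume "f \<in> lam G ` carrier G"
  then obtain s t where st: "(s, t) \<in> carrier G" "f = lam G (s, t)" by auto
  then have "f = MU ((- kk m k (nat t)) mod int m) ((- s * int k ^ nat t) mod int m)" using lamG by simp
  moreover have "(- kk m k (nat t)) mod int m \<in> Lset m n k" using st(1) by (auto simp: carrierG Lset_def)
  moreover have "(- s * int k ^ nat t) mod int m \<in> {0..<int m}" using m0 by simp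
  ultimately show "f \<in> {MU r y | r y. r \<in> Lset m n k \<and> y \<in> {0..<int m}}" by blast
next
  fix f assume "f \<in> {MU r y | r y. r \<in> Lset m n k \<and> y \<in> {0..<int m}}"
  then obtain t0 y where f: "f = MU ((- kk m k t0) mod int m) y" "t0 < n" "y \<in> {0..<int m}" by (auto simp: Lset_def)
  define s where "s = (- y * int k ^ nat ((int n - int t0) mod int n)) mod int m"
  have sc: "(s, int t0) \<in> carrier G" using m0 f by (simp add: carrierG s_def)
  have "[- s * int k ^ t0 = - (- y * int k ^ nat ((int n - int t0) mod int n)) * int k ^ t0] (mod int m)"
    unfolding s_def by (intro cong_mult cong_refl cong_minus_minus_iff[THEN iffD2] modc)
  also have "- (- y * int k ^ nat ((int n - int t0) mod int n)) * int k ^ t0 = y * (int k ^ nat ((int n - int t0) mod int n) * int k ^ t0)"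
    by (simp add: algebra_simps)
  also have "[y * (int k ^ nat ((int n - int t0) mod int n) * int k ^ t0) = y * 1] (mod int m)"
    by (intro cong_mult cong_refl kinv)
  finally have "(- s * int k ^ t0) mod int m = y" using f(3) by (simp add: cong_def)
  then have "lam G (s, int t0) = f" using lamG[OF sc] f by simp
  then show "f \<in> lam G ` carrier G" using sc by blast
qed


lemma sgrp_range: "v \<in> mult_sgrp m S \<Longrightarrow> v \<in> {0..<int m}"
  by (induction rule: mult_sgrp.induct) (use m0 in auto)

lemma Cset1: "Cset m n k x 1 = {MU x z | z. z \<in> {0..<int m}}"
  unfolding Cset_def using m0 by force

lemma sub1:
  assumes "S \<subseteq> {0..<int m}"
  shows "map_sgrp (carrier G) {MU r y | r y. r \<in> S \<and> y \<in> {0..<int m}} \<subseteq> (\<Union>x \<in> mult_sgrp m S. Cset m n k x 1)"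
proof
  fix f assume "f \<in> map_sgrp (carrier G) {MU r y | r y. r \<in> S \<and> y \<in> {0..<int m}}"
  then show "f \<in> (\<Union>x \<in> mult_sgrp m S. Cset m n k x 1)"
  proof (induction rule: map_sgrp.induct)
    case (gen f)
    then obtain r y where f: "f = MU r y" "r \<in> S" "y \<in> {0..<int m}" by blast
    have "r mod int m \<in> mult_sgrp m S" using f(2) by (rule mult_sgrp.gen)
    moreover have "r mod int m = r" using f(2) assms by auto
    ultimately show ?case using f by (auto simp: Cset1)
  next
    case (comp f g)
    then obtain x z x' z' where f: "x \<in> mult_sgrp m S" "f = MU x z" and g: "x' \<in> mult_sgrp m S" "g = MU x' z'"
      by (auto simp: Cset1)
    have "compose (carrier G) g f = MU ((x * x') mod int m) ((x' * z) mod int m)"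
      unfolding f g by (rule trans[OF mu_comp mu_mod])
    moreover have "(x * x') mod int m \<in> mult_sgrp m S" using f g by (intro mult_sgrp.mul)
    moreover have "(x' * z) mod int m \<in> {0..<int m}" using m0 by simp
    ultimately show ?case by (auto simp: Cset1)
  qed
qed

lemma L1:
  assumes "v \<in> mult_sgrp m S"
  shows "\<exists>y. MU v y \<in> map_sgrp (carrier G) {MU r y | r y. r \<in> S \<and> y \<in> {0..<int m}}"
  using assms
proof (induction rule: mult_sgrp.induct)
  case (gen s)
  have "MU s 0 \<in> map_sgrp (carrier G) {MU r y | r y. r \<in> S \<and> y \<in> {0..<int m}}"
  proof (intro map_sgrp.gen)
    show "MU s 0 \<in> {MU r y | r y. r \<in> S \<and> y \<in> {0..<int m}}" 
      using gen m0 by (intro CollectI exI[of _ s] exI[of _ 0]) simp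
  qed
  moreover have "MU s 0 = MU (s mod int m) 0"
  proof -
    have e: "(0::int) mod int m = 0" by simp
    show ?thesis using mu_mod[of s 0] unfolding e .
  qed
  ultimately show ?case by auto
next
  case (mul a b)
  then obtain ya yb where a: "MU a ya \<in> map_sgrp (carrier G) {MU r y | r y. r \<in> S \<and> y \<in> {0..<int m}}"
    and b: "MU b yb \<in> map_sgrp (carrier G) {MU r y | r y. r \<in> S \<and> y \<in> {0..<int m}}" by blast
  have "compose (carrier G) (MU b yb) (MU a ya) \<in> map_sgrp (carrier G) {MU r y | r y. r \<in> S \<and> y \<in> {0..<int m}}"
    using a b by (rule map_sgrp.comp)
  moreover have "compose (carrier G) (MU b yb) (MU a ya) = MU ((a * b) mod int m) ((b * ya) mod int m)"
    by (rule trans[OF mu_comp mu_mod])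
  ultimately show ?case by auto
qed

lemma pow_in: "u \<in> mult_sgrp m S \<Longrightarrow> (u ^ Suc N) mod int m \<in> mult_sgrp m S"
proof (induction N)
  case 0
  then show ?case using sgrp_range[OF 0] by simp
next
  case (Suc N)
  then have "(u * ((u ^ Suc N) mod int m)) mod int m \<in> mult_sgrp m S" by (intro mult_sgrp.mul) auto
  moreover have "(u * ((u ^ Suc N) mod int m)) mod int m = (u ^ Suc (Suc N)) mod int m"
    by (simp add: mod_mult_right_eq)
  ultimately show ?case by simp
qed

lemma unit_inv:
  assumes "u \<in> mult_sgrp m S" "coprime u (int m)"
  shows "\<exists>v \<in> mult_sgrp m S. [u * v = 1] (mod int m)"
proof -
  have ur: "0 \<le> u" using sgrp_range[OF assms(1)] by simp
  define N where "N = totient m"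
  have N0: "N > 0" using m0 by (simp add: N_def)
  have "coprime (nat u) m" using assms(2) ur by (metis coprime_int_iff int_nat_eq)
  then have "[nat u ^ N = 1] (mod m)" unfolding N_def by (rule euler_theorem)
  then have e: "[u ^ N = 1] (mod int m)" using ur by (metis cong_int_iff of_nat_1 of_nat_power int_nat_eq)
  define v where "v = (u ^ Suc (2 * N - 2)) mod int m"
  have "v \<in> mult_sgrp m S" unfolding v_def using assms(1) by (rule pow_in)
  moreover have "[u * v = 1] (mod int m)"
  proof -
    have "[u * v = u * u ^ Suc (2 * N - 2)] (mod int m)" unfolding v_def by (intro cong_mult cong_refl modc)
    also have "u * u ^ Suc (2 * N - 2) = u ^ (N + N)"
    proof -
      have h: "Suc (Suc (2 * N - 2)) = N + N" using N0 by simp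
      have "u * u ^ Suc (2 * N - 2) = u ^ Suc (Suc (2 * N - 2))" by (simp only: power_Suc)
      then show ?thesis unfolding h .
    qed
    also have "... = u ^ N * u ^ N" by (rule power_add)
    also have "[u ^ N * u ^ N = 1 * 1] (mod int m)" by (intro cong_mult e)
    finally show ?thesis by simp
  qed
  ultimately show ?thesis by blast
qed


lemma main_S:
  assumes S: "S \<subseteq> {0..<int m}" and B: "\<forall>x\<in>mult_sgrp m S. basic m S x"
  shows "map_sgrp (carrier G) {MU r y | r y. r \<in> S \<and> y \<in> {0..<int m}} = (\<Union>x\<in>mult_sgrp m S. Cset m n k x 1)"
proof
  show "map_sgrp (carrier G) {MU r y | r y. r \<in> S \<and> y \<in> {0..<int m}} \<subseteq> (\<Union>x\<in>mult_sgrp m S. Cset m n k x 1)"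
    using S by (rule sub1)
next
  let ?T = "map_sgrp (carrier G) {MU r y | r y. r \<in> S \<and> y \<in> {0..<int m}}"
  show "(\<Union>x\<in>mult_sgrp m S. Cset m n k x 1) \<subseteq> ?T"
  proof
    fix f assume "f \<in> (\<Union>x\<in>mult_sgrp m S. Cset m n k x 1)"
    then obtain x z where x: "x \<in> mult_sgrp m S" and f: "f = MU x z" and z: "z \<in> {0..<int m}"
      by (auto simp: Cset1)
    have "basic m S x" using B x by blast
    then obtain u where u: "u \<in> units_in m (mult_sgrp m S)" and r: "(x * u) mod int m \<in> S"
      unfolding basic_def orb_def by blast
    define r where "r = (x * u) mod int m"
    have uS: "u \<in> mult_sgrp m S" and uc: "coprime u (int m)" using u by (auto simp: units_in_def)
    obtain v where v: "v \<in> mult_sgrp m S" and uv: "[u * v = 1] (mod int m)" using unit_inv[OF uS uc] by blast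
    obtain y' where y': "MU v y' \<in> ?T" using L1[OF v] by blast
    define y0 where "y0 = (u * z) mod int m"
    have "MU r y0 \<in> ?T"
    proof (intro map_sgrp.gen)
      show "MU r y0 \<in> {MU r y | r y. r \<in> S \<and> y \<in> {0..<int m}}"
        using r m0 unfolding r_def y0_def by (intro CollectI exI[of _ "(x * u) mod int m"] exI[of _ "(u * z) mod int m"]) simp
    qed
    then have "compose (carrier G) (MU v y') (MU r y0) \<in> ?T" using y' by (intro map_sgrp.comp)
    moreover have "compose (carrier G) (MU v y') (MU r y0) = MU ((r * v) mod int m) ((v * y0) mod int m)"
      by (rule trans[OF mu_comp mu_mod])
    moreover have "(r * v) mod int m = x"
    proof -
      have "[r * v = (x * u) * v] (mod int m)" unfolding r_def by (intro cong_mult modc cong_refl)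
      also have "(x * u) * v = x * (u * v)" by (simp add: algebra_simps)
      also have "[x * (u * v) = x * 1] (mod int m)" by (intro cong_mult cong_refl uv)
      finally show ?thesis using sgrp_range[OF x] by (simp add: cong_def)
    qed
    moreover have "(v * y0) mod int m = z"
    proof -
      have "[v * y0 = v * (u * z)] (mod int m)" unfolding y0_def by (intro cong_mult modc cong_refl)
      also have "v * (u * z) = (u * v) * z" by (simp add: algebra_simps)
      also have "[(u * v) * z = 1 * z] (mod int m)" by (intro cong_mult cong_refl uv)
      finally show ?thesis using z by (simp add: cong_def)
    qed
    ultimately show "f \<in> ?T" using f by simp
  qed
qed

lemma disj_S:
  "\<forall>x \<in> mult_sgrp m S. \<forall>y \<in> mult_sgrp m S. x \<noteq> y \<longrightarrow> Cset m n k x 1 \<inter> Cset m n k y 1 = {}"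
proof (intro ballI impI)
  fix x y assume x: "x \<in> mult_sgrp m S" and y: "y \<in> mult_sgrp m S" and ne: "x \<noteq> y"
  show "Cset m n k x 1 \<inter> Cset m n k y 1 = {}"
  proof (rule ccontr)
    assume "Cset m n k x 1 \<inter> Cset m n k y 1 \<noteq> {}"
    then obtain z z' where "z \<in> {0..<int m}" "z' \<in> {0..<int m}" "MU x z = MU y z'" by (auto simp: Cset1)
    then have "x = y" using mu_inj sgrp_range[OF x] sgrp_range[OF y] by blast
    with ne show False by simp
  qed
qed

lemma card_S: "card (\<Union>x\<in>mult_sgrp m S. Cset m n k x 1) = card (mult_sgrp m S) * m"
proof -
  have eq: "(\<Union>x\<in>mult_sgrp m S. Cset m n k x 1) = (\<lambda>(x, z). MU x z) ` (mult_sgrp m S \<times> {0..<int m})"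
  proof (intro equalityI subsetI)
    fix f assume "f \<in> (\<Union>x\<in>mult_sgrp m S. Cset m n k x 1)"
    then obtain x z where xz: "x \<in> mult_sgrp m S" "z \<in> {0..<int m}" "f = MU x z" by (auto simp: Cset1)
    show "f \<in> (\<lambda>(x, z). MU x z) ` (mult_sgrp m S \<times> {0..<int m})"
      by (rule image_eqI[of _ _ "(x, z)"]) (use xz in auto)
  next
    fix f assume "f \<in> (\<lambda>(x, z). MU x z) ` (mult_sgrp m S \<times> {0..<int m})"
    then obtain x z where xz: "x \<in> mult_sgrp m S" "z \<in> {0..<int m}" "f = MU x z" by auto
    have "f \<in> Cset m n k x 1" unfolding Cset1 using xz by blast
    then show "f \<in> (\<Union>x\<in>mult_sgrp m S. Cset m n k x 1)" using xz(1) by blast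
  qed
  have inj: "inj_on (\<lambda>(x, z). MU x z) (mult_sgrp m S \<times> {0..<int m})"
  proof (rule inj_onI)
    fix p q assume p: "p \<in> mult_sgrp m S \<times> {0..<int m}" and q: "q \<in> mult_sgrp m S \<times> {0..<int m}"
      and e: "(\<lambda>(x, z). MU x z) p = (\<lambda>(x, z). MU x z) q"
    obtain x z where pe: "p = (x, z)" by (cases p)
    obtain x' z' where qe: "q = (x', z')" by (cases q)
    have "x \<in> {0..<int m}" "x' \<in> {0..<int m}" using p q pe qe sgrp_range by auto
    moreover have "z \<in> {0..<int m}" "z' \<in> {0..<int m}" using p q pe qe by auto
    moreover have "MU x z = MU x' z'" using e pe qe by simp
    ultimately show "p = q" using mu_inj pe qe by blast
  qed
  have fin: "finite (mult_sgrp m S)" using sgrp_range by (meson finite_atLeastLessThan_int finite_subset subsetI)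
  have "card (\<Union>x\<in>mult_sgrp m S. Cset m n k x 1) = card (mult_sgrp m S \<times> {0..<int m})"
    unfolding eq by (rule card_image[OF inj])
  also have "... = card (mult_sgrp m S) * m" by (simp add: card_cartesian_product)
  finally show ?thesis .
qed

lemma final:
  shows "((\<forall>x \<in> mult_sgrp m (Rset m n k). basic m (Rset m n k) x) \<longrightarrow>
            PG (Gmnk m n k) = (\<Union>x \<in> mult_sgrp m (Rset m n k). Cset m n k x 1)
          \<and> (\<forall>x \<in> mult_sgrp m (Rset m n k). \<forall>y \<in> mult_sgrp m (Rset m n k).
               x \<noteq> y \<longrightarrow> Cset m n k x 1 \<inter> Cset m n k y 1 = {})
          \<and> card (PG (Gmnk m n k)) = card (mult_sgrp m (Rset m n k)) * m)
       \<and> ((\<forall>x \<in> mult_sgrp m (Lset m n k). basic m (Lset m n k) x) \<longrightarrow>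
            LG (Gmnk m n k) = (\<Union>x \<in> mult_sgrp m (Lset m n k). Cset m n k x 1)
          \<and> (\<forall>x \<in> mult_sgrp m (Lset m n k). \<forall>y \<in> mult_sgrp m (Lset m n k).
               x \<noteq> y \<longrightarrow> Cset m n k x 1 \<inter> Cset m n k y 1 = {})
          \<and> card (LG (Gmnk m n k)) = card (mult_sgrp m (Lset m n k)) * m)"
proof (intro conjI impI)
  have R: "Rset m n k \<subseteq> {0..<int m}" using m0 by (auto simp: Rset_def kk_def)
  have L: "Lset m n k \<subseteq> {0..<int m}" using m0 by (auto simp: Lset_def)
  {
    assume B: "\<forall>x \<in> mult_sgrp m (Rset m n k). basic m (Rset m n k) x"
    show P: "PG G = (\<Union>x \<in> mult_sgrp m (Rset m n k). Cset m n k x 1)"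
      unfolding PG_def gens_rho by (rule main_S[OF R B])
    show "card (PG G) = card (mult_sgrp m (Rset m n k)) * m" unfolding P by (rule card_S)
  }
  {
    assume B: "\<forall>x \<in> mult_sgrp m (Lset m n k). basic m (Lset m n k) x"
    show P: "LG G = (\<Union>x \<in> mult_sgrp m (Lset m n k). Cset m n k x 1)"
      unfolding LG_def gens_lam by (rule main_S[OF L B])
    show "card (LG G) = card (mult_sgrp m (Lset m n k)) * m" unfolding P by (rule card_S)
  }
qed (rule disj_S)+

end

theorem corollary4p12:
  fixes m n k :: nat
  assumes "m > 0" and "k > 0" and "coprime m (k - 1)" and "is_ind m k n"
  shows "((\<forall>x \<in> mult_sgrp m (Rset m n k). basic m (Rset m n k) x) \<longrightarrow>
            PG (Gmnk m n k) = (\<Union>x \<in> mult_sgrp m (Rset m n k). Cset m n k x 1)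
          \<and> (\<forall>x \<in> mult_sgrp m (Rset m n k). \<forall>y \<in> mult_sgrp m (Rset m n k).
               x \<noteq> y \<longrightarrow> Cset m n k x 1 \<inter> Cset m n k y 1 = {})
          \<and> card (PG (Gmnk m n k)) = card (mult_sgrp m (Rset m n k)) * m)
       \<and> ((\<forall>x \<in> mult_sgrp m (Lset m n k). basic m (Lset m n k) x) \<longrightarrow>
            LG (Gmnk m n k) = (\<Union>x \<in> mult_sgrp m (Lset m n k). Cset m n k x 1)
          \<and> (\<forall>x \<in> mult_sgrp m (Lset m n k). \<forall>y \<in> mult_sgrp m (Lset m n k).
               x \<noteq> y \<longrightarrow> Cset m n k x 1 \<inter> Cset m n k y 1 = {})
          \<and> card (LG (Gmnk m n k)) = card (mult_sgrp m (Lset m n k)) * m)"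
  by (rule final[OF assms])

end
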